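(* Let $p$ be a prime and let $\mathrm{Circ}(a_0,\ldots,a_{p-1})$ be a Hermitian circulant with universal perfect state transfer. Then $a_j\neq 0$ for $j=1,\ldots,p-1$.
   Context: $\mathrm{Circ}(a_0,\ldots,a_{n-1})$ denotes the $n\times n$ matrix $C$ with $C_{j,k}=a_{k-j}$ (indices mod $n$). A graph with Hermitian adjacency matrix $A$ has universal perfect state transfer if for every pair of vertices $v,w$ there is $t>0$ with $|\langle w|e^{-\mathtt{i} At}|v\rangle|=1$. *)

theory Defs
  imports Complex_Main "HOL-Computational_Algebra.Primes" "Jordan_Normal_Form.Matrix"
begin

definition circ_mat :: "nat \<Rightarrow> (nat \<Rightarrow> complex) \<Rightarrow> complex mat" where
  "circ_mat n a = mat n n (\<lambda>(j,k). a ((k + n - j) mod n))"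

definition hermitian_mat :: "complex mat \<Rightarrow> bool" where
  "hermitian_mat A \<longleftrightarrow> dim_row A = dim_col A \<and>
     (\<forall>j < dim_row A. \<forall>k < dim_row A. A $$ (k, j) = cnj (A $$ (j, k)))"

definition mat_exp :: "complex mat \<Rightarrow> complex mat" where
  "mat_exp M = mat (dim_row M) (dim_col M)
     (\<lambda>(i,j). \<Sum>k. (M ^\<^sub>m k) $$ (i, j) / of_nat (fact k))"

definition universal_pst :: "complex mat \<Rightarrow> bool" where
  "universal_pst A \<longleftrightarrow> (\<forall>v < dim_row A. \<forall>w < dim_row A. v \<noteq> w \<longrightarrow>
     (\<exists>t::real. t > 0 \<and> cmod (mat_exp ((- \<i> * complex_of_real t) \<cdot>\<^sub>m A) $$ (w, v)) = 1))"

end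

theory Submission
  imports Defs "Berlekamp_Zassenhaus.Factor_Bound"
begin

lemma eisenstein_aux:
  fixes f g :: "int poly" and P :: int
  assumes P: "prime P"
    and fg: "f * g = h"
    and h0: "\<not> P * P dvd coeff h 0"
    and hi: "\<And>i. i < degree h \<Longrightarrow> P dvd coeff h i"
    and hl: "\<not> P dvd lead_coeff h"
    and f0: "P dvd coeff f 0"
  shows "degree g = 0"
proof -
  have h00: "h \<noteq> 0" using hl by auto
  hence fz: "f \<noteq> 0" and gz: "g \<noteq> 0" using fg by auto
  have dh: "degree h = degree f + degree g" using fg degree_mult_eq[OF fz gz] by simp
  have lc: "lead_coeff h = lead_coeff f * lead_coeff g" using fg lead_coeff_mult by metis
  hence lf: "\<not> P dvd lead_coeff f" using hl by (metis dvd_mult2)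
  have c0: "coeff h 0 = coeff f 0 * coeff g 0" using coeff_mult_0[of f g] fg by simp
  have g0: "\<not> P dvd coeff g 0"
  proof
    assume "P dvd coeff g 0"
    with f0 have "P * P dvd coeff f 0 * coeff g 0" by (rule mult_dvd_mono)
    with h0 c0 show False by simp
  qed
  define r where "r = (LEAST i. \<not> P dvd coeff f i)"
  have rex: "\<not> P dvd coeff f r" unfolding r_def by (rule LeastI[of _ "degree f"]) (use lf in auto)
  have rle: "r \<le> degree f" unfolding r_def by (rule Least_le) (use lf in auto)
  have rlt: "\<And>i. i < r \<Longrightarrow> P dvd coeff f i" unfolding r_def using not_less_Least by blast
  have "degree g = 0"
  proof (rule ccontr)
    assume "degree g \<noteq> 0"
    hence rl: "r < degree h" using dh rle by simp
    have "coeff h r = (\<Sum>i\<le>r. coeff f i * coeff g (r - i))" unfolding fg[symmetric] by (rule coeff_mult)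
    also have "\<dots> = (\<Sum>i<r. coeff f i * coeff g (r - i)) + coeff f r * coeff g 0"
      by (simp add: lessThan_Suc_atMost[symmetric])
    finally have eq: "coeff h r = (\<Sum>i<r. coeff f i * coeff g (r - i)) + coeff f r * coeff g 0" .
    have "P dvd (\<Sum>i<r. coeff f i * coeff g (r - i))"
      by (rule dvd_sum) (simp add: rlt)
    moreover have "P dvd coeff h r" using hi rl by blast
    ultimately have "P dvd coeff f r * coeff g 0" using eq by (metis dvd_add_right_iff)
    with P rex g0 show False by (simp add: prime_dvd_mult_iff)
  qed
  thus ?thesis .
qed

lemma eisenstein:
  fixes f g :: "int poly" and P :: int
  assumes P: "prime P"
    and fg: "f * g = h"
    and h0: "\<not> P * P dvd coeff h 0" "P dvd coeff h 0"
    and hi: "\<And>i. i < degree h \<Longrightarrow> P dvd coeff h i"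
    and hl: "\<not> P dvd lead_coeff h"
  shows "degree f = 0 \<or> degree g = 0"
proof -
  have c0: "coeff h 0 = coeff f 0 * coeff g 0" using coeff_mult_0[of f g] fg by simp
  hence "P dvd coeff f 0 \<or> P dvd coeff g 0" using h0(2) P by (simp add: prime_dvd_mult_iff)
  thus ?thesis
  proof
    assume a: "P dvd coeff f 0"
    have "degree g = 0" using eisenstein_aux[of P f g h] P fg h0(1) hi hl a by blast
    thus ?thesis by blast
  next
    assume a: "P dvd coeff g 0"
    have fg': "g * f = h" using fg by (simp add: mult.commute)
    have "degree f = 0" using eisenstein_aux[of P g f h] P fg' h0(1) hi hl a by blast
    thus ?thesis by blast
  qed
qed

lemma psi_coeff:
  fixes p :: nat
  defines "\<Psi> \<equiv> (\<Sum>k<p. [:1,1:]^k) :: int poly"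
  shows "coeff \<Psi> i = (if i < p then int (p choose (i+1)) else 0)"
proof -
  have "[:1,1:]^p - 1 = ([:1,1:] - 1) * \<Psi>" unfolding \<Psi>_def by (rule power_diff_1_eq)
  also have "([:1,1:] - 1 :: int poly) = [:0,1:]" by (simp add: poly_eq_iff coeff_pCons split: nat.split)
  finally have e: "[:1,1:]^p - 1 = pCons 0 \<Psi>" by simp
  have "coeff \<Psi> i = coeff (pCons 0 \<Psi>) (Suc i)" by simp
  also have "\<dots> = coeff ([:1,1:]^p) (Suc i)" unfolding e[symmetric] by (simp only: coeff_diff coeff_1) simp
  also have "\<dots> = (if i < p then int (p choose (i+1)) else 0)"
  proof (cases "i < p")
    case True
    have "Suc i \<le> p" using True by simp
    from coeff_linear_poly_power[OF this, of "1::int" 1] True show ?thesis by simp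
  next
    case False
    have "degree ([:1,1:]^p :: int poly) \<le> p" by (rule order.trans[OF degree_power_le]) simp
    with False show ?thesis by (simp add: coeff_eq_0)
  qed
  finally show ?thesis .
qed

lemma psi_irr:
  fixes p :: nat
  assumes p: "prime p"
  defines "\<Psi> \<equiv> (\<Sum>k<p. [:1,1:]^k) :: int poly"
  assumes fg: "f * g = \<Psi>"
  shows "degree f = 0 \<or> degree g = 0"
proof -
  have p2: "p \<ge> 2" using p prime_ge_2_nat by blast
  have c: "\<And>i. coeff \<Psi> i = (if i < p then int (p choose (i+1)) else 0)"
    unfolding \<Psi>_def by (rule psi_coeff)
  have dg: "degree \<Psi> = p - 1"
  proof (rule antisym)
    show "degree \<Psi> \<le> p - 1" by (rule degree_le) (auto simp: c)
    show "p - 1 \<le> degree \<Psi>" by (rule le_degree) (use p2 in \<open>simp add: c\<close>)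
  qed
  have P: "prime (int p)" using p by simp
  show ?thesis
  proof (rule eisenstein[OF P fg])
    show "\<not> int p * int p dvd coeff \<Psi> 0" using p2 by (simp add: c)
    show "int p dvd coeff \<Psi> 0" by (simp add: c)
    show "int p dvd coeff \<Psi> i" if "i < degree \<Psi>" for i
    proof -
      have "p dvd (p choose (i+1))" using that dg p2 p by (intro dvd_choose_prime) auto
      thus ?thesis using that dg by (simp add: c)
    qed
    show "\<not> int p dvd lead_coeff \<Psi>" using p2 dg by (simp add: c)
  qed
qed

lemma phi_coeff: "coeff (\<Sum>k<p. monom (1::'a::comm_ring_1) k) i = (if i < p then 1 else 0)"
  by (simp add: coeff_sum)

lemma phi_degree:
  assumes "p \<ge> 1"
  shows "degree (\<Sum>k<p. monom (1::'a::{comm_ring_1,ring_char_0}) k) = p - 1"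
proof (rule antisym)
  show "degree (\<Sum>k<p. monom (1::'a) k) \<le> p - 1" by (rule degree_le) (auto simp: phi_coeff)
  show "p - 1 \<le> degree (\<Sum>k<p. monom (1::'a) k)" by (rule le_degree) (use assms in \<open>simp add: phi_coeff\<close>)
qed

lemma phi_irr_int:
  assumes p: "prime p"
  shows "irreducible\<^sub>d (\<Sum>k<p. monom (1::int) k)"
proof -
  define \<Phi> where "\<Phi> = (\<Sum>k<p. monom (1::int) k)"
  have p2: "p \<ge> 2" using p prime_ge_2_nat by blast
  have dP: "degree \<Phi> = p - 1" unfolding \<Phi>_def by (rule phi_degree) (use p2 in auto)
  have comp: "\<Phi> \<circ>\<^sub>p [:1,1:] = (\<Sum>k<p. [:1,1:]^k)"
    unfolding \<Phi>_def by (simp add: pcompose_hom.hom_sum monom_altdef pcompose_hom.hom_power pcompose_pCons)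
  show ?thesis unfolding \<Phi>_def[symmetric]
  proof (rule irreducible\<^sub>dI)
    show "0 < degree \<Phi>" using dP p2 by simp
    fix q r assume q: "degree q > 0" "degree q < degree \<Phi>" and r: "degree r > 0" "degree r < degree \<Phi>"
      and e: "\<Phi> = q * r"
    have "(q \<circ>\<^sub>p [:1,1:]) * (r \<circ>\<^sub>p [:1,1:]) = (\<Sum>k<p. [:1,1:]^k)"
      using comp e by (simp add: pcompose_mult)
    from psi_irr[OF p this] have "degree (q \<circ>\<^sub>p [:1,1:]) = 0 \<or> degree (r \<circ>\<^sub>p [:1,1:]) = 0" .
    thus False using q r by (simp add: degree_pcompose)
  qed
qed

lemma phi_irr_rat:
  assumes p: "prime p"
  shows "irreducible\<^sub>d (\<Sum>k<p. monom (1::rat) k)"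
proof -
  have "irreducible\<^sub>d (map_poly rat_of_int (\<Sum>k<p. monom (1::int) k))"
    by (rule irreducible\<^sub>d_int_rat[OF phi_irr_int[OF p]])
  moreover have "map_poly rat_of_int (\<Sum>k<p. monom (1::int) k) = (\<Sum>k<p. monom (1::rat) k)"
    by (simp add: of_int_poly_hom.hom_sum)
  ultimately show ?thesis by simp
qed

interpretation rat_cpx: map_poly_comm_ring_hom "of_rat :: rat \<Rightarrow> complex" ..

lemma ev_sum_monom:
  "poly (map_poly (of_rat :: rat \<Rightarrow> complex) (\<Sum>k<p. monom (c k) k)) z = (\<Sum>k<p. of_rat (c k) * z^k)"
  by (simp add: rat_cpx.hom_sum poly_sum poly_monom)

lemma key_lemma:
  fixes z :: complex and m :: "nat \<Rightarrow> int"
  assumes p: "prime p" and zp: "z^p = 1" and z1: "z \<noteq> 1"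
    and s: "(\<Sum>k<p. of_int (m k) * z^k) = 0"
  shows "\<forall>k<p. m k = m 0"
proof -
  define \<Phi> where "\<Phi> = (\<Sum>k<p. monom (1::rat) k)"
  define M where "M = (\<Sum>k<p. monom (rat_of_int (m k)) k)"
  define ev where "ev = (\<lambda>P. poly (map_poly (of_rat :: rat \<Rightarrow> complex) P) z)"
  have evmult: "ev (P * Q) = ev P * ev Q" for P Q unfolding ev_def by (simp add: rat_cpx.hom_mult)
  have evadd: "ev (P + Q) = ev P + ev Q" for P Q unfolding ev_def by (simp add: rat_cpx.hom_add)
  have p2: "p \<ge> 2" using p prime_ge_2_nat by blast
  have irr: "irreducible\<^sub>d \<Phi>" unfolding \<Phi>_def by (rule phi_irr_rat[OF p])
  have dP: "degree \<Phi> = p - 1" unfolding \<Phi>_def by (rule phi_degree) (use p2 in auto)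
  have cP: "coeff \<Phi> k = 1" if "k < p" for k unfolding \<Phi>_def using that by (simp add: phi_coeff)
  have cM: "coeff M k = of_int (m k)" if "k < p" for k unfolding M_def using that by (simp add: coeff_sum)
  have dM: "degree M \<le> p - 1" unfolding M_def by (rule degree_le) (auto simp: coeff_sum)
  have evP: "ev \<Phi> = 0" unfolding ev_def \<Phi>_def ev_sum_monom using zp z1 by (simp add: sum_gp_strict)
  have evM: "ev M = 0" unfolding ev_def M_def ev_sum_monom using s by simp
  define g where "g = gcd \<Phi> M"
  have bz: "fst (bezout_coefficients \<Phi> M) * \<Phi> + snd (bezout_coefficients \<Phi> M) * M = g"
    unfolding g_def by (rule bezout_coefficients_fst_snd)
  have "ev g = ev (fst (bezout_coefficients \<Phi> M) * \<Phi> + snd (bezout_coefficients \<Phi> M) * M)"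
    by (simp only: bz)
  also have "\<dots> = ev (fst (bezout_coefficients \<Phi> M)) * ev \<Phi> + ev (snd (bezout_coefficients \<Phi> M)) * ev M"
    by (simp only: evadd evmult)
  finally have evg: "ev g = 0" using evP evM by simp
  have P0: "\<Phi> \<noteq> 0" using dP p2 irr by auto
  hence g0: "g \<noteq> 0" unfolding g_def by simp
  have dg0: "degree g \<noteq> 0"
  proof
    assume "degree g = 0"
    then obtain c where gc: "g = [:c:]" by (rule degree_eq_zeroE)
    with g0 have "c \<noteq> 0" by simp
    moreover have "ev g = of_rat c" unfolding ev_def gc by (cases "c = 0") (simp_all add: map_poly_simps)
    ultimately show False using evg by simp
  qed
  obtain h where h: "\<Phi> = g * h" using gcd_dvd1[of \<Phi> M] unfolding g_def by (elim dvdE) simp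
  have h0: "h \<noteq> 0" using h P0 by auto
  have dsum: "degree \<Phi> = degree g + degree h" using h g0 h0 degree_mult_eq by metis
  have dh: "degree h = 0"
  proof (rule ccontr)
    assume "degree h \<noteq> 0"
    hence "degree g < degree \<Phi>" "degree h < degree \<Phi>" using dsum dg0 by auto
    with irreducible\<^sub>dD(2)[OF irr] h show False by blast
  qed
  then obtain c where hc: "h = [:c:]" by (rule degree_eq_zeroE)
  have c0: "c \<noteq> 0" using h0 hc by simp
  have dgP: "degree g = p - 1" using dsum dh dP by simp
  obtain s where sM: "M = g * s" using gcd_dvd2[of \<Phi> M] unfolding g_def by (elim dvdE) simp
  show ?thesis
  proof (cases "s = 0")
    case True
    hence "M = 0" using sM by simp
    have "m k = 0" if "k < p" for k using cM[OF that] \<open>M = 0\<close> by simp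
    moreover have "0 < p" using p2 by simp
    ultimately show ?thesis by auto
  next
    case False
    have "degree M = degree g + degree s" using sM degree_mult_eq[OF g0 False] by simp
    hence "degree s = 0" using dM dgP by simp
    then obtain d where sd: "s = [:d:]" by (rule degree_eq_zeroE)
    have cMd: "coeff M k = d / c" if "k < p" for k
    proof -
      have gc: "g * [:c:] = smult c g" by simp
      have gd: "g * [:d:] = smult d g" by simp
      have "coeff \<Phi> k = c * coeff g k" unfolding h hc gc by simp
      hence "c * coeff g k = 1" using cP[OF that] by simp
      hence "coeff g k = 1 / c" using c0 by (simp add: field_simps)
      moreover have "coeff M k = d * coeff g k" unfolding sM sd gd by simp
      ultimately show ?thesis by simp
    qed
    have e: "rat_of_int (m k) = d / c" if "k < p" for k
      using cM[OF that] cMd[OF that] by (rule subst)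
    have p0: "0 < p" using p2 by simp
    have "m k = m 0" if "k < p" for k
    proof -
      have "rat_of_int (m k) = rat_of_int (m 0)" using e[OF that] e[OF p0] by (rule trans[OF _ sym])
      thus ?thesis by (rule of_int_eq_iff[THEN iffD1])
    qed
    thus ?thesis by blast
  qed
qed

definition rw :: "nat \<Rightarrow> complex" where "rw p = cis (2 * pi / real p)"

lemma rw_pow: "rw p ^ n = cis (2 * pi * real n / real p)"
  unfolding rw_def DeMoivre by (simp add: field_simps)

lemma rw_norm [simp]: "norm (rw p ^ n) = 1"
  by (simp add: rw_pow)

lemma rw_p: "p > 0 \<Longrightarrow> rw p ^ p = 1"
  by (simp add: rw_pow)

lemma pow_mod_gen: assumes "(z::complex)^p = 1" shows "z^a = z^(a mod p)"
proof -
  have "z^a = z^(a mod p + p * (a div p))" by simp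
  also have "\<dots> = z^(a mod p) * (z^p)^(a div p)" by (simp only: power_add power_mult)
  also have "\<dots> = z^(a mod p)" using assms by simp
  finally show ?thesis .
qed

lemma rw_mod: assumes "p > 0" "a mod p = b mod p" shows "rw p ^ a = rw p ^ b"
  using pow_mod_gen[OF rw_p[OF assms(1)], of a] pow_mod_gen[OF rw_p[OF assms(1)], of b] assms(2) by simp

lemma cis_eq_1: "cis x = 1 \<longleftrightarrow> (\<exists>n::int. x = 2 * pi * of_int n)"
proof
  assume "cis x = 1"
  hence "cos x = 1" by (metis cis.sel(1) one_complex.sel(1))
  then obtain n :: int where "x = real_of_int n * 2 * pi" using cos_one_2pi_int by blast
  hence "x = 2 * pi * of_int n" by simp
  thus "\<exists>n::int. x = 2 * pi * of_int n" by blast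
next
  assume "\<exists>n::int. x = 2 * pi * of_int n"
  then obtain n :: int where "x = 2 * pi * of_int n" by blast
  thus "cis x = 1" by simp
qed

lemma rw_one_iff: assumes "p > 0" shows "rw p ^ n = 1 \<longleftrightarrow> p dvd n"
proof
  assume "rw p ^ n = 1"
  then obtain i :: int where "2 * pi * real n / real p = 2 * pi * of_int i" unfolding rw_pow cis_eq_1 by blast
  hence "real n = real_of_int i * real p" using assms by (simp add: field_simps)
  hence "int n = i * int p" by (metis of_int_eq_iff of_int_mult of_int_of_nat_eq)
  hence "int p dvd int n" by simp
  thus "p dvd n" by simp
next
  assume "p dvd n"
  then obtain q where "n = p * q" by blast
  thus "rw p ^ n = 1" by (simp add: power_mult rw_p[OF assms])
qed

lemma rw_orth: assumes "p > 0"
  shows "(\<Sum>k<p. (rw p ^ r) ^ k) = (if p dvd r then of_nat p else 0)"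
proof (cases "p dvd r")
  case True
  hence "rw p ^ r = 1" using rw_one_iff[OF assms] by simp
  thus ?thesis using True by simp
next
  case False
  have "(rw p ^ r) ^ p = 1" by (simp add: power_mult[symmetric] mult.commute power_mult rw_p[OF assms])
  thus ?thesis using False rw_one_iff[OF assms] by (simp add: sum_gp_strict)
qed

lemma rw_inversion:
  assumes "p > 0" "v < p"
  shows "(\<Sum>k<p. (\<Sum>i<p. X i * rw p ^ (i*k)) * rw p ^ ((p - v) * k)) = of_nat p * X v"
proof -
  have pw: "rw p ^ (i*k) * rw p ^ ((p - v) * k) = (rw p ^ (i + p - v)) ^ k" for i k
  proof -
    have "rw p ^ (i*k) * rw p ^ ((p - v) * k) = rw p ^ (i*k + (p - v) * k)" by (simp only: power_add)
    also have "i*k + (p - v) * k = (i + p - v) * k" using assms(2) by (simp add: algebra_simps)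
    finally show ?thesis by (simp only: power_mult)
  qed
  have "(\<Sum>k<p. (\<Sum>i<p. X i * rw p ^ (i*k)) * rw p ^ ((p - v) * k))
      = (\<Sum>k<p. \<Sum>i<p. X i * (rw p ^ (i + p - v)) ^ k)"
    by (simp only: sum_distrib_right mult.assoc pw)
  also have "\<dots> = (\<Sum>i<p. \<Sum>k<p. X i * (rw p ^ (i + p - v)) ^ k)"
    by (rule sum.swap)
  also have "\<dots> = (\<Sum>i<p. X i * (\<Sum>k<p. (rw p ^ (i + p - v)) ^ k))"
    by (simp only: sum_distrib_left)
  also have "\<dots> = (\<Sum>i<p. X i * (if i = v then of_nat p else 0))"
  proof (rule sum.cong[OF refl])
    fix i assume i: "i \<in> {..<p}"
    have "p dvd (i + p - v) \<longleftrightarrow> i = v"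
    proof
      assume d: "p dvd (i + p - v)"
      then obtain q where q: "i + p - v = p * q" by blast
      have "i + p - v < p * 2" "0 < i + p - v" using i assms by auto
      hence "p * q < p * 2" "0 < p * q" unfolding q by simp_all
      hence "q < 2" "0 < q" using assms(1) by simp_all
      hence "q = 1" by simp
      thus "i = v" using q assms i by auto
    qed simp
    thus "X i * (\<Sum>k<p. (rw p ^ (i + p - v)) ^ k) = X i * (if i = v then of_nat p else 0)"
      by (simp add: rw_orth[OF assms(1)])
  qed
  also have "\<dots> = (\<Sum>i<p. if i = v then X v * of_nat p else 0)"
    by (rule sum.cong) auto
  also have "\<dots> = of_nat p * X v" using assms by (simp add: mult.commute)
  finally show ?thesis .
qed

definition lam :: "nat \<Rightarrow> (nat \<Rightarrow> complex) \<Rightarrow> nat \<Rightarrow> complex" where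
  "lam p a k = (\<Sum>m<p. a m * rw p ^ (m*k))"

lemma circ_dims [simp]: "dim_row (circ_mat p a) = p" "dim_col (circ_mat p a) = p"
  unfolding circ_mat_def by simp_all

lemma circ_index: "l < p \<Longrightarrow> i < p \<Longrightarrow> circ_mat p a $$ (l,i) = a ((i + p - l) mod p)"
  unfolding circ_mat_def by simp

lemma mod_lem1: assumes "l < (p::nat)" "i < p" shows "((i + p - l) mod p + l) mod p = i"
proof (cases "l \<le> i")
  case True
  hence e: "i + p - l = (i - l) + p" by arith
  have "(i + p - l) mod p = (i - l) mod p" unfolding e by (rule mod_add_self2)
  also have "\<dots> = i - l" using assms by (intro mod_less) arith
  finally have "(i + p - l) mod p + l = i" using True by arith
  thus ?thesis using assms by simp
next
  case False
  have "(i + p - l) mod p = i + p - l" using assms False by (intro mod_less) arith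
  moreover have "i + p - l + l = i + p" using assms by arith
  ultimately show ?thesis using assms by simp
qed

lemma mod_lem2: assumes "l < (p::nat)" "m < p" shows "((m + l) mod p + p - l) mod p = m"
proof (cases "m + l < p")
  case True
  hence "(m + l) mod p = m + l" by (rule mod_less)
  hence "(m + l) mod p + p - l = m + p" by arith
  thus ?thesis using assms by simp
next
  case False
  have e: "m + l = (m + l - p) + p" using False by arith
  have "(m + l) mod p = (m + l - p) mod p" by (subst e) (rule mod_add_self2)
  also have "\<dots> = m + l - p" using assms by (intro mod_less) arith
  finally have "(m + l) mod p + p - l = m" using False by arith
  thus ?thesis using assms by simp
qed

lemma circ_eig:
  assumes p: "p > 0" and l: "l < p"
  shows "(\<Sum>i<p. circ_mat p a $$ (l,i) * rw p ^ (i*k)) = lam p a k * rw p ^ (l*k)"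
proof -
  have "(\<Sum>i<p. circ_mat p a $$ (l,i) * rw p ^ (i*k)) = (\<Sum>i<p. a ((i + p - l) mod p) * rw p ^ (i*k))"
    using l by (intro sum.cong) (auto simp: circ_index)
  also have "\<dots> = (\<Sum>m<p. a m * rw p ^ (((m + l) mod p) * k))"
  proof (rule sum.reindex_bij_witness[of _ "\<lambda>m. (m + l) mod p" "\<lambda>i. (i + p - l) mod p"])
    fix i assume "i \<in> {..<p}"
    thus "((i + p - l) mod p + l) mod p = i" using mod_lem1[OF l] by simp
    show "(i + p - l) mod p \<in> {..<p}" using p by simp
    show "a ((i + p - l) mod p) * rw p ^ (((i + p - l) mod p + l) mod p * k) = a ((i + p - l) mod p) * rw p ^ (i * k)"
      using mod_lem1[OF l] \<open>i \<in> {..<p}\<close> by simp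
  next
    fix m assume "m \<in> {..<p}"
    thus "((m + l) mod p + p - l) mod p = m" using mod_lem2[OF l] by simp
    show "(m + l) mod p \<in> {..<p}" using p by simp
  qed
  also have "\<dots> = (\<Sum>m<p. a m * rw p ^ (m*k) * rw p ^ (l*k))"
  proof (rule sum.cong[OF refl])
    fix m
    have "rw p ^ (((m + l) mod p) * k) = rw p ^ ((m + l) * k)"
      by (rule rw_mod[OF p]) (simp add: mod_mult_left_eq)
    thus "a m * rw p ^ (((m + l) mod p) * k) = a m * rw p ^ (m*k) * rw p ^ (l*k)"
      by (simp add: algebra_simps power_add)
  qed
  also have "\<dots> = lam p a k * rw p ^ (l*k)" unfolding lam_def by (simp add: sum_distrib_right)
  finally show ?thesis .
qed

lemma ar0: assumes "m < (p::nat)" shows "((p - m) mod p + m) mod p = 0"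
proof (cases "m = 0")
  case True thus ?thesis by simp
next
  case False
  hence "(p - m) mod p = p - m" using assms by (intro mod_less) arith
  moreover have "p - m + m = p" using assms by arith
  ultimately show ?thesis by simp
qed

lemma ar1: assumes "m < (p::nat)" shows "((p - m) mod p * k + m * k) mod p = 0"
proof -
  have "(p - m) mod p * k + m * k = ((p - m) mod p + m) * k" by (simp add: algebra_simps)
  hence "((p - m) mod p * k + m * k) mod p = (((p - m) mod p + m) * k) mod p" by simp
  also have "\<dots> = ((((p - m) mod p + m) mod p) * k) mod p" by (rule mod_mult_left_eq[symmetric])
  also have "\<dots> = 0" using ar0[OF assms] by simp
  finally show ?thesis .
qed

lemma ar2: assumes "m < (p::nat)" shows "(p - (p - m) mod p) mod p = m"
proof (cases "m = 0")
  case True thus ?thesis by simp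
next
  case False
  hence "(p - m) mod p = p - m" using assms by (intro mod_less) arith
  moreover have "p - (p - m) = m" using assms by arith
  ultimately show ?thesis using assms by simp
qed

lemma herm_a:
  assumes "hermitian_mat (circ_mat p a)" "m < p"
  shows "a ((p - m) mod p) = cnj (a m)"
proof -
  have H0: "\<forall>j < dim_row (circ_mat p a). \<forall>k < dim_row (circ_mat p a). circ_mat p a $$ (k, j) = cnj (circ_mat p a $$ (j, k))"
    using assms(1) unfolding hermitian_mat_def by blast
  have H: "\<forall>j < p. \<forall>k < p. circ_mat p a $$ (k, j) = cnj (circ_mat p a $$ (j, k))"
    using H0 by (simp only: circ_dims)
  have p0: "0 < p" using assms(2) by simp
  have e: "circ_mat p a $$ (m, 0) = cnj (circ_mat p a $$ (0, m))"
    using H[rule_format, OF p0 assms(2)] .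
  have e1: "circ_mat p a $$ (m, 0) = a ((0 + p - m) mod p)" by (rule circ_index[OF assms(2) p0])
  have e2: "circ_mat p a $$ (0, m) = a ((m + p - 0) mod p)" by (rule circ_index[OF p0 assms(2)])
  have "(m + p - 0) mod p = m" using assms(2) by simp
  thus ?thesis using e e1 e2 by simp
qed

lemma cnj_rw:
  assumes p: "p > 0" and m: "m < p"
  shows "cnj (rw p ^ (m*k)) = rw p ^ (((p - m) mod p) * k)"
proof -
  have "rw p ^ (((p - m) mod p) * k) * rw p ^ (m*k) = rw p ^ (((p - m) mod p) * k + m * k)"
    by (simp add: power_add)
  also have "\<dots> = rw p ^ 0"
    by (rule rw_mod[OF p]) (simp only: ar1[OF m] mod_0)
  finally have e1: "rw p ^ (((p - m) mod p) * k) * rw p ^ (m*k) = 1" by simp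
  have "of_real ((norm (rw p ^ (m*k)))^2) = rw p ^ (m*k) * cnj (rw p ^ (m*k))"
    by (rule complex_norm_square)
  hence "rw p ^ (m*k) * cnj (rw p ^ (m*k)) = 1" by (simp only: rw_norm power_one of_real_1)
  hence e2: "cnj (rw p ^ (m*k)) * rw p ^ (m*k) = 1" by (simp only: mult.commute)
  have nz: "rw p ^ (m*k) \<noteq> 0" using rw_norm[of p "m*k"] by (metis norm_zero zero_neq_one)
  from e1 e2 have eq: "cnj (rw p ^ (m*k)) * rw p ^ (m*k) = rw p ^ (((p - m) mod p) * k) * rw p ^ (m*k)" by simp
  show ?thesis using mult_right_cancel[OF nz] eq by blast
qed

lemma lam_real:
  assumes h: "hermitian_mat (circ_mat p a)" and p: "p > 0"
  shows "cnj (lam p a k) = lam p a k"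
proof -
  have "cnj (lam p a k) = (\<Sum>m<p. a ((p - m) mod p) * rw p ^ (((p - m) mod p) * k))"
    unfolding lam_def cnj_sum
  proof (rule sum.cong[OF refl])
    fix m assume "m \<in> {..<p}"
    hence m: "m < p" by simp
    show "cnj (a m * rw p ^ (m * k)) = a ((p - m) mod p) * rw p ^ ((p - m) mod p * k)"
      by (simp only: complex_cnj_mult herm_a[OF h m] cnj_rw[OF p m])
  qed
  also have "\<dots> = lam p a k" unfolding lam_def
  proof (rule sum.reindex_bij_witness[of _ "\<lambda>m. (p - m) mod p" "\<lambda>m. (p - m) mod p"])
    fix m assume m: "m \<in> {..<p}"
    show "(p - (p - m) mod p) mod p = m" using m ar2 by simp
    show "(p - m) mod p \<in> {..<p}" using p by simp
    show "a ((p - m) mod p) * rw p ^ ((p - m) mod p * k) = a ((p - m) mod p) * rw p ^ ((p - m) mod p * k)" ..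
  next
    fix m assume m: "m \<in> {..<p}"
    show "(p - (p - m) mod p) mod p = m" using m ar2 by simp
    show "(p - m) mod p \<in> {..<p}" using p by simp
  qed
  finally show ?thesis .
qed

lemma circ_carrier: "circ_mat p a \<in> carrier_mat p p" unfolding carrier_mat_def by simp

lemma pow_eig:
  assumes p: "p > 0" and l: "l < p"
  shows "(\<Sum>i<p. ((c \<cdot>\<^sub>m circ_mat p a) ^\<^sub>m n) $$ (l,i) * rw p ^ (i*k)) = (c * lam p a k)^n * rw p ^ (l*k)"
  using l
proof (induction n arbitrary: l)
  case 0
  have "(\<Sum>i<p. ((c \<cdot>\<^sub>m circ_mat p a) ^\<^sub>m 0) $$ (l,i) * rw p ^ (i*k)) = (\<Sum>i<p. if i = l then rw p ^ (l*k) else 0)"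
    using 0 by (intro sum.cong) auto
  also have "\<dots> = rw p ^ (l*k)" using 0 by simp
  finally show ?case by simp
next
  case (Suc n)
  define M where "M = c \<cdot>\<^sub>m circ_mat p a"
  define B where "B = M ^\<^sub>m n"
  have Mc: "M \<in> carrier_mat p p" unfolding M_def using circ_carrier by simp
  have Bc: "B \<in> carrier_mat p p" unfolding B_def using Mc by (rule pow_carrier_mat)
  have Mi: "M $$ (j,i) = c * circ_mat p a $$ (j,i)" if "j < p" "i < p" for i j
    unfolding M_def using that by simp
  have e1: "(B * M) $$ (l,i) = (\<Sum>j<p. B $$ (l,j) * M $$ (j,i))" if "i < p" for i
  proof -
    have "(B * M) $$ (l,i) = row B l \<bullet> col M i" using Bc Mc Suc.prems that by (intro index_mult_mat) auto
    also have "\<dots> = (\<Sum>j\<in>{0..<p}. B $$ (l,j) * M $$ (j,i))"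
      unfolding scalar_prod_def using Bc Mc Suc.prems that by (intro sum.cong) auto
    finally show ?thesis by (simp add: atLeast0LessThan)
  qed
  have e2: "(\<Sum>i<p. M $$ (j,i) * rw p ^ (i*k)) = c * lam p a k * rw p ^ (j*k)" if "j < p" for j
  proof -
    have "(\<Sum>i<p. M $$ (j,i) * rw p ^ (i*k)) = c * (\<Sum>i<p. circ_mat p a $$ (j,i) * rw p ^ (i*k))"
      unfolding sum_distrib_left using that by (intro sum.cong) (auto simp: Mi)
    also have "\<dots> = c * lam p a k * rw p ^ (j*k)" using circ_eig[OF p that] by simp
    finally show ?thesis .
  qed
  have "(\<Sum>i<p. (M ^\<^sub>m Suc n) $$ (l,i) * rw p ^ (i*k)) = (\<Sum>i<p. (\<Sum>j<p. B $$ (l,j) * M $$ (j,i)) * rw p ^ (i*k))"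
    unfolding pow_mat.simps(2) B_def[symmetric] by (intro sum.cong) (auto simp: e1)
  also have "\<dots> = (\<Sum>i<p. \<Sum>j<p. B $$ (l,j) * (M $$ (j,i) * rw p ^ (i*k)))"
    by (simp only: sum_distrib_right mult.assoc)
  also have "\<dots> = (\<Sum>j<p. \<Sum>i<p. B $$ (l,j) * (M $$ (j,i) * rw p ^ (i*k)))"
    by (rule sum.swap)
  also have "\<dots> = (\<Sum>j<p. B $$ (l,j) * (\<Sum>i<p. M $$ (j,i) * rw p ^ (i*k)))"
    by (simp only: sum_distrib_left)
  also have "\<dots> = (\<Sum>j<p. B $$ (l,j) * (c * lam p a k * rw p ^ (j*k)))"
    by (intro sum.cong) (auto simp: e2)
  also have "\<dots> = c * lam p a k * (\<Sum>j<p. B $$ (l,j) * rw p ^ (j*k))"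
    by (simp add: sum_distrib_left algebra_simps)
  also have "\<dots> = c * lam p a k * ((c * lam p a k)^n * rw p ^ (l*k))"
    unfolding B_def M_def using Suc.IH[OF Suc.prems] by simp
  finally show ?case unfolding M_def by simp
qed

lemma pow_entry:
  assumes p: "p > 0" and l: "l < p"
  shows "of_nat p * ((c \<cdot>\<^sub>m circ_mat p a) ^\<^sub>m n) $$ (l,0) = (\<Sum>k<p. (c * lam p a k)^n * rw p ^ (l*k))"
proof -
  have "of_nat p * ((c \<cdot>\<^sub>m circ_mat p a) ^\<^sub>m n) $$ (l,0)
     = (\<Sum>k<p. (\<Sum>i<p. ((c \<cdot>\<^sub>m circ_mat p a) ^\<^sub>m n) $$ (l,i) * rw p ^ (i*k)) * rw p ^ ((p - 0) * k))"
    by (rule rw_inversion[OF p p, symmetric])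
  also have "\<dots> = (\<Sum>k<p. (c * lam p a k)^n * rw p ^ (l*k))"
  proof (rule sum.cong[OF refl])
    fix k
    have "rw p ^ ((p - 0) * k) = 1" by (simp add: power_mult rw_p[OF p])
    thus "(\<Sum>i<p. ((c \<cdot>\<^sub>m circ_mat p a) ^\<^sub>m n) $$ (l,i) * rw p ^ (i*k)) * rw p ^ ((p - 0) * k) = (c * lam p a k)^n * rw p ^ (l*k)"
      using pow_eig[OF p l] by simp
  qed
  finally show ?thesis .
qed

lemma exp_series_c: "(\<lambda>n. (x::complex)^n / of_nat (fact n)) sums exp x"
proof -
  have "(\<lambda>n. x^n /\<^sub>R fact n) = (\<lambda>n. x^n / of_nat (fact n))"
    by (rule ext) (simp add: scaleR_conv_of_real divide_inverse mult.commute)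
  thus ?thesis using exp_converges[of x] by simp
qed

lemma exp_entry:
  assumes p: "p > 0" and l: "l < p"
  shows "mat_exp (c \<cdot>\<^sub>m circ_mat p a) $$ (l,0) = (\<Sum>k<p. exp (c * lam p a k) * rw p ^ (l*k)) / of_nat p"
proof -
  have "mat_exp (c \<cdot>\<^sub>m circ_mat p a) $$ (l,0) = (\<Sum>n. ((c \<cdot>\<^sub>m circ_mat p a) ^\<^sub>m n) $$ (l,0) / of_nat (fact n))"
    unfolding mat_exp_def using l p by simp
  also have "\<dots> = (\<Sum>k<p. exp (c * lam p a k) * rw p ^ (l*k)) / of_nat p"
  proof (rule sums_unique[symmetric])
    have "(\<lambda>n. \<Sum>k<p. (c * lam p a k)^n / of_nat (fact n) * (rw p ^ (l*k) / of_nat p))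
        sums (\<Sum>k<p. exp (c * lam p a k) * (rw p ^ (l*k) / of_nat p))"
      by (intro sums_sum sums_mult2 exp_series_c)
    moreover have "(\<lambda>n. \<Sum>k<p. (c * lam p a k)^n / of_nat (fact n) * (rw p ^ (l*k) / of_nat p))
        = (\<lambda>n. ((c \<cdot>\<^sub>m circ_mat p a) ^\<^sub>m n) $$ (l,0) / of_nat (fact n))"
    proof
      fix n
      have "((c \<cdot>\<^sub>m circ_mat p a) ^\<^sub>m n) $$ (l,0) = (\<Sum>k<p. (c * lam p a k)^n * rw p ^ (l*k)) / of_nat p"
        using pow_entry[OF p l, of c a n] p by (simp add: field_simps)
      thus "(\<Sum>k<p. (c * lam p a k)^n / of_nat (fact n) * (rw p ^ (l*k) / of_nat p))
        = ((c \<cdot>\<^sub>m circ_mat p a) ^\<^sub>m n) $$ (l,0) / of_nat (fact n)"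
        by (simp add: sum_divide_distrib field_simps)
    qed
    moreover have "(\<Sum>k<p. exp (c * lam p a k) * (rw p ^ (l*k) / of_nat p)) = (\<Sum>k<p. exp (c * lam p a k) * rw p ^ (l*k)) / of_nat p"
      by (simp add: sum_divide_distrib)
    ultimately show "(\<lambda>n. ((c \<cdot>\<^sub>m circ_mat p a) ^\<^sub>m n) $$ (l,0) / of_nat (fact n)) sums ((\<Sum>k<p. exp (c * lam p a k) * rw p ^ (l*k)) / of_nat p)"
      by simp
  qed
  finally show ?thesis .
qed

lemma tri_eq:
  fixes u :: "nat \<Rightarrow> complex"
  assumes n: "n > 0" and u1: "\<And>k. k < n \<Longrightarrow> norm (u k) = 1"
    and S: "norm (\<Sum>k<n. u k) = real n"
  shows "\<And>k. k < n \<Longrightarrow> u k = u 0"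
proof -
  define T where "T = (\<Sum>k<n. u k)"
  have ST: "norm T = real n" using S unfolding T_def .
  have "norm T \<noteq> 0" using ST n by simp
  hence T0: "cnj T \<noteq> 0" by auto
  have le: "Re (u k * cnj T) \<le> real n" if "k < n" for k
  proof -
    have "Re (u k * cnj T) \<le> norm (u k * cnj T)" by (rule complex_Re_le_cmod)
    also have "\<dots> = real n" using u1[OF that] ST by (simp add: norm_mult)
    finally show ?thesis .
  qed
  have "(\<Sum>k<n. Re (u k * cnj T)) = Re (\<Sum>k<n. u k * cnj T)" by (simp only: Re_sum)
  also have "(\<Sum>k<n. u k * cnj T) = T * cnj T" by (simp only: T_def sum_distrib_right)
  also have "Re (T * cnj T) = (norm T)^2" by (simp only: complex_norm_square[symmetric] Re_complex_of_real)
  also have "\<dots> = real n * real n" using ST by (simp add: power2_eq_square)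
  finally have sumeq: "(\<Sum>k<n. Re (u k * cnj T)) = real n * real n" .
  have "(\<Sum>k<n. real n - Re (u k * cnj T)) = (\<Sum>k<n. real n) - (\<Sum>k<n. Re (u k * cnj T))"
    by (rule sum_subtractf)
  also have "(\<Sum>k<n. real n) = real n * real n" by simp
  finally have s2: "(\<Sum>k<n. real n - Re (u k * cnj T)) = 0" using sumeq by simp
  have nonneg: "\<And>k. k \<in> {..<n} \<Longrightarrow> 0 \<le> real n - Re (u k * cnj T)" using le by auto
  have z: "\<forall>k\<in>{..<n}. real n - Re (u k * cnj T) = 0"
    by (rule sum_nonneg_eq_0_iff[THEN iffD1, OF finite_lessThan nonneg s2])
  have eqk: "u k * cnj T = of_real (real n)" if "k < n" for k
  proof -
    have r: "Re (u k * cnj T) = real n" using z that by auto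
    have nm: "norm (u k * cnj T) = real n" using u1[OF that] ST by (simp add: norm_mult)
    have "(norm (u k * cnj T))^2 = (Re (u k * cnj T))^2 + (Im (u k * cnj T))^2" by (rule cmod_power2)
    hence "Im (u k * cnj T) = 0" using r nm by simp
    thus ?thesis using r by (simp add: complex_eq_iff)
  qed
  fix k assume k: "k < n"
  have "u k * cnj T = u 0 * cnj T" using eqk[OF k] eqk[OF n] by simp
  thus "u k = u 0" using T0 by simp
qed

lemma lam_real_ex:
  assumes h: "hermitian_mat (circ_mat p a)" and p: "p > 0"
  shows "lam p a k = of_real (Re (lam p a k))"
proof -
  have "Im (cnj (lam p a k)) = Im (lam p a k)" using lam_real[OF h p, of k] by simp
  hence "Im (lam p a k) = 0" by simp
  thus ?thesis by (simp add: complex_eq_iff)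
qed

theorem lemma4:
  fixes p :: nat and a :: "nat \<Rightarrow> complex"
  assumes "prime p"
    and "hermitian_mat (circ_mat p a)"
    and "universal_pst (circ_mat p a)"
  shows "\<forall>j \<in> {1..p-1}. a j \<noteq> 0"
proof (rule ballI, rule notI)
  fix j assume j: "j \<in> {1..p-1}" and aj: "a j = 0"
  have p2: "p \<ge> 2" using assms(1) prime_ge_2_nat by blast
  hence p0: "p > 0" by simp
  have j1: "1 \<le> j" "j < p" using j p2 by auto
  have U: "\<forall>v<p. \<forall>w<p. v \<noteq> w \<longrightarrow> (\<exists>t::real. t > 0 \<and>
       cmod (mat_exp ((- \<i> * complex_of_real t) \<cdot>\<^sub>m circ_mat p a) $$ (w, v)) = 1)"
    using assms(3) unfolding universal_pst_def circ_dims(1) .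
  have "\<exists>t::real. t > 0 \<and> cmod (mat_exp ((- \<i> * complex_of_real t) \<cdot>\<^sub>m circ_mat p a) $$ (1, 0)) = 1"
    using U[rule_format, of 0 1] p2 by simp
  then obtain t :: real where t: "t > 0"
    and pst: "cmod (mat_exp ((- \<i> * complex_of_real t) \<cdot>\<^sub>m circ_mat p a) $$ (1, 0)) = 1" by blast
  define c where "c = - \<i> * complex_of_real t"
  define r where "r = (\<lambda>k. Re (lam p a k))"
  have Lr: "lam p a k = of_real (r k)" for k unfolding r_def by (rule lam_real_ex[OF assms(2) p0])
  define u where "u = (\<lambda>k. exp (c * lam p a k) * rw p ^ (1*k))"
  have ucis: "u k = cis (- (t * r k) + 2 * pi * real k / real p)" for k
  proof -
    have "exp (c * lam p a k) = cis (- (t * r k))"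
      unfolding c_def Lr cis_conv_exp by (simp add: algebra_simps)
    moreover have "rw p ^ (1*k) = cis (2 * pi * real k / real p)" by (simp add: rw_pow)
    ultimately show ?thesis unfolding u_def by (simp add: cis_mult)
  qed
  have un: "norm (u k) = 1" for k unfolding ucis by simp
  have entry: "mat_exp (c \<cdot>\<^sub>m circ_mat p a) $$ (1,0) = (\<Sum>k<p. u k) / of_nat p"
    unfolding u_def using exp_entry[OF p0, of 1 c a] p2 by simp
  have "norm ((\<Sum>k<p. u k) / of_nat p) = 1" using pst entry unfolding c_def by simp
  hence S: "norm (\<Sum>k<p. u k) = real p" using p0 by (simp add: norm_divide)
  have ueq: "u k = u 0" if "k < p" for k by (rule tri_eq[OF p0 _ S that]) (simp add: un)
  have "\<forall>k. \<exists>n::int. k < p \<longrightarrow> - (t * r k) + 2 * pi * real k / real p + t * r 0 = 2 * pi * of_int n"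
  proof (intro allI)
    fix k
    show "\<exists>n::int. k < p \<longrightarrow> - (t * r k) + 2 * pi * real k / real p + t * r 0 = 2 * pi * of_int n"
    proof (cases "k < p")
      case True
      have "cis (- (t * r k) + 2 * pi * real k / real p) = cis (- (t * r 0))"
        using ueq[OF True] unfolding ucis by simp
      hence "cis (- (t * r k) + 2 * pi * real k / real p) * cis (t * r 0) = cis (- (t * r 0)) * cis (t * r 0)" by simp
      hence "cis (- (t * r k) + 2 * pi * real k / real p + t * r 0) = 1" by (simp add: cis_mult)
      thus ?thesis unfolding cis_eq_1 by blast
    qed simp
  qed
  hence "\<exists>nn::nat \<Rightarrow> int. \<forall>k. k < p \<longrightarrow> - (t * r k) + 2 * pi * real k / real p + t * r 0 = 2 * pi * of_int (nn k)"
    by (rule choice)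
  then obtain nn :: "nat \<Rightarrow> int" where nn0: "\<forall>k. k < p \<longrightarrow> - (t * r k) + 2 * pi * real k / real p + t * r 0 = 2 * pi * of_int (nn k)"
    by blast
  have nn: "- (t * r k) + 2 * pi * real k / real p + t * r 0 = 2 * pi * of_int (nn k)" if "k < p" for k
    using nn0 that by blast
  define m where "m = (\<lambda>k. int k - int p * nn k)"
  have tm: "t * (r k - r 0) = (2 * pi / real p) * of_int (m k)" if "k < p" for k
  proof -
    have "t * (r k - r 0) = 2 * pi * real k / real p - 2 * pi * of_int (nn k)" using nn[OF that] by (simp add: algebra_simps)
    also have "\<dots> = (2 * pi / real p) * (real k - real p * of_int (nn k))" using p0 by (simp add: field_simps)
    finally show ?thesis unfolding m_def by simp
  qed
  define z where "z = rw p ^ (p - j)"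
  have "z ^ p = (rw p ^ p) ^ (p - j)" unfolding z_def by (simp only: power_mult[symmetric] mult.commute)
  hence zp: "z ^ p = 1" by (simp add: rw_p[OF p0])
  have ndvd: "\<not> p dvd (p - j)" using j1 by (auto dest: dvd_imp_le)
  have z1: "z \<noteq> 1" unfolding z_def using rw_one_iff[OF p0] ndvd by simp
  have zs: "(\<Sum>k<p. z ^ k) = 0" unfolding z_def using rw_orth[OF p0, of "p - j"] ndvd by simp
  have "(\<Sum>k<p. (\<Sum>i<p. a i * rw p ^ (i*k)) * rw p ^ ((p - j) * k)) = of_nat p * a j"
    by (rule rw_inversion[OF p0 j1(2)])
  hence Lz: "(\<Sum>k<p. lam p a k * z ^ k) = 0" unfolding lam_def z_def aj by (simp add: power_mult)
  have "(\<Sum>k<p. of_real (t * (r k - r 0)) * z ^ k) = of_real t * ((\<Sum>k<p. lam p a k * z ^ k) - lam p a 0 * (\<Sum>k<p. z ^ k))"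
    unfolding Lr by (simp add: sum_distrib_left sum_subtractf algebra_simps)
  also have "\<dots> = 0" using Lz zs by simp
  finally have s1: "(\<Sum>k<p. of_real (t * (r k - r 0)) * z ^ k) = 0" .
  have "(\<Sum>k<p. of_real (t * (r k - r 0)) * z ^ k) = (\<Sum>k<p. of_real (2 * pi / real p) * (of_int (m k) * z ^ k))"
  proof (rule sum.cong[OF refl])
    fix k assume "k \<in> {..<p}"
    hence k: "k < p" by simp
    have "(of_real (t * (r k - r 0)) :: complex) = of_real ((2 * pi / real p) * of_int (m k))" by (simp only: tm[OF k])
    also have "\<dots> = of_real (2 * pi / real p) * of_int (m k)" by simp
    finally show "of_real (t * (r k - r 0)) * z ^ k = of_real (2 * pi / real p) * (of_int (m k) * z ^ k)"
      by (simp only: mult.assoc)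
  qed
  also have "\<dots> = of_real (2 * pi / real p) * (\<Sum>k<p. of_int (m k) * z ^ k)"
    by (simp only: sum_distrib_left)
  finally have "of_real (2 * pi / real p) * (\<Sum>k<p. of_int (m k) * z ^ k) = (0::complex)" using s1 by simp
  moreover have "of_real (2 * pi / real p) \<noteq> (0::complex)" using p0 by simp
  ultimately have s2: "(\<Sum>k<p. of_int (m k) * z ^ k) = 0" by simp
  have mall: "\<forall>k<p. m k = m 0" by (rule key_lemma[OF assms(1) zp z1 s2])
  have "1 < p" using p2 by simp
  with mall have m10: "m 1 = m 0" by blast
  have "1 = int p * nn 1 - int p * nn 0" using m10 unfolding m_def by simp
  also have "\<dots> = int p * (nn 1 - nn 0)" by (simp only: right_diff_distrib)
  finally have "int p dvd 1" by (rule dvdI)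
  hence "p = 1" by simp
  thus False using p2 by simp
qed

end
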